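(* In the game $\mathcal{B}_0(120,6)$, no pure strategy is weakly dominated by another pure strategy.
   Context: Fix integers $N\ge1$, $K\ge2$ and a real number $\alpha$. The Colonel Blotto game $\mathcal{B}_\alpha(N,K)$ is the two-player simultaneous-move game with players $A,B$, each with pure strategy set $S=\{s\in\{0,1,\ldots,N\}^K:\sum_{k=1}^K s_k=N\}$, in which the payoff of player $i$ at the pure profile $(s^i,s^{-i})$ is $\pi^i(s^i,s^{-i})=\sum_{k=1}^K\big(\mathbf 1[s^i_k>s^{-i}_k]+\tfrac{\alpha}{2}\mathbf 1[s^i_k=s^{-i}_k]\big)$. A pure strategy $s\in S$ is weakly dominated by a pure strategy $\hat s\in S$ if $\pi^i(s,t)\le\pi^i(\hat s,t)$ for all $t\in S$ and $\pi^i(s,t)<\pi^i(\hat s,t)$ for at least one $t\in S$. *)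

theory Defs
  imports Complex_Main
begin

definition blotto_strategies :: "nat \<Rightarrow> nat \<Rightarrow> (nat \<Rightarrow> nat) set" where
  "blotto_strategies N K =
     {s. (\<forall>k. K \<le> k \<longrightarrow> s k = 0) \<and> (\<forall>k<K. s k \<le> N) \<and> (\<Sum>k<K. s k) = N}"

definition blotto_payoff :: "real \<Rightarrow> nat \<Rightarrow> (nat \<Rightarrow> nat) \<Rightarrow> (nat \<Rightarrow> nat) \<Rightarrow> real" where
  "blotto_payoff \<alpha> K s t =
     (\<Sum>k<K. (if s k > t k then 1 else 0) + (\<alpha> / 2) * (if s k = t k then 1 else 0))"

definition weakly_dominated_by ::
    "real \<Rightarrow> nat \<Rightarrow> nat \<Rightarrow> (nat \<Rightarrow> nat) \<Rightarrow> (nat \<Rightarrow> nat) \<Rightarrow> bool" where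
  "weakly_dominated_by \<alpha> N K s s' \<longleftrightarrow>
     (\<forall>t\<in>blotto_strategies N K. blotto_payoff \<alpha> K s t \<le> blotto_payoff \<alpha> K s' t) \<and>
     (\<exists>t\<in>blotto_strategies N K. blotto_payoff \<alpha> K s t < blotto_payoff \<alpha> K s' t)"

end

theory Submission
  imports Defs
begin

lemma exists_gt:
  assumes s: "s \<in> blotto_strategies N K" and s': "s' \<in> blotto_strategies N K" and ne: "s \<noteq> s'"
  shows "\<exists>k<K. s k > s' k"
proof (rule ccontr)
  assume "\<not> ?thesis"
  hence le: "\<forall>k<K. s k \<le> s' k" by auto
  have eqs: "(\<Sum>k<K. s k) = (\<Sum>k<K. s' k)" using s s' by (simp add: blotto_strategies_def)
  have "\<forall>k<K. s k = s' k"
  proof (rule ccontr)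
    assume "\<not> (\<forall>k<K. s k = s' k)"
    then obtain j where j: "j < K" "s j < s' j" using le by (meson le_neq_implies_less)
    have "(\<Sum>k<K. s k) < (\<Sum>k<K. s' k)"
      by (rule sum_strict_mono_ex1) (use le j in auto)
    thus False using eqs by simp
  qed
  moreover have "\<forall>k. K \<le> k \<longrightarrow> s k = s' k" using s s' by (simp add: blotto_strategies_def)
  ultimately have "s = s'" by (metis ext not_le)
  thus False using ne by simp
qed

lemma no_dom:
  assumes s: "s \<in> blotto_strategies N K" and s': "s' \<in> blotto_strategies N K"
  shows "\<not> weakly_dominated_by 0 N K s s'"
proof (cases "s = s'")
  case True thus ?thesis by (simp add: weakly_dominated_by_def)
next
  case False
  then obtain k where k: "k < K" "s k > s' k" using exists_gt s s' by blast
  have p0: "blotto_payoff 0 K s' s' = 0" by (simp add: blotto_payoff_def)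
  have "blotto_payoff 0 K s s' > 0"
    unfolding blotto_payoff_def
    by (rule sum_pos2[where i=k]) (use k in auto)
  hence "\<not> blotto_payoff 0 K s s' \<le> blotto_payoff 0 K s' s'" using p0 by simp
  thus ?thesis using s' by (auto simp: weakly_dominated_by_def)
qed

theorem corollary3:
  "\<forall>s\<in>blotto_strategies 120 6. \<forall>s'\<in>blotto_strategies 120 6.
     \<not> weakly_dominated_by 0 120 6 s s'"
  using no_dom by blast

end
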